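(* Let $f(z)=z+\sum_{n=2}^{\infty}a_nz^n\in\mathcal{S}^{*}_{\rho}$ and set $$\Omega_2:=(a_4a_6-a_5^2)-a_2(a_3a_6-a_4a_5)+a_3(a_3a_5-a_4^2).$$ Then $$|\Omega_2|\le \frac{1136896+716800\sqrt{3/157}+81920\sqrt{3/67}+212736\sqrt{2/35}+74240\sqrt{21/307}+10240\sqrt{6/23}}{3686400}\approx 0.360465 .$$
   Context: Let $\mathbb{D}=\{z\in\mathbb{C}:|z|<1\}$. For analytic $g_1,g_2$ on $\mathbb{D}$, $g_1\prec g_2$ means there is an analytic $w:\mathbb{D}\to\mathbb{D}$ with $w(0)=0$ such that $g_1=g_2\circ w$. Here $\sinh^{-1}$ denotes the principal branch of the inverse hyperbolic sine with $\sinh^{-1}(0)=0$, analytic on $\mathbb{D}$. The class $\mathcal{S}^{*}_{\rho}$ consists of all univalent analytic functions $f$ on $\mathbb{D}$ with $f(z)=z+\sum_{n\ge2}a_nz^n$ such that $\frac{zf'(z)}{f(z)}\prec 1+\sinh^{-1}(z)$. *)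

theory Defs
  imports "HOL-Complex_Analysis.Complex_Analysis"
begin

definition subordinate :: "(complex \<Rightarrow> complex) \<Rightarrow> (complex \<Rightarrow> complex) \<Rightarrow> bool" where
  "subordinate g1 g2 \<longleftrightarrow>
     (\<exists>w. w holomorphic_on ball 0 1 \<and> w ` ball 0 1 \<subseteq> ball 0 1 \<and> w 0 = 0 \<and>
          (\<forall>z\<in>ball 0 1. g1 z = g2 (w z)))"

definition taylor_coeff :: "(complex \<Rightarrow> complex) \<Rightarrow> nat \<Rightarrow> complex" where
  "taylor_coeff f n = (deriv ^^ n) f 0 / of_nat (fact n)"

text \<open>The class S*_rho: normalized univalent analytic f on D with z f'/f \<prec> 1 + arsinh z.
  At z = 0 the quotient z f'(z)/f(z) is understood by its removable value 1.\<close>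
definition S_star_rho :: "(complex \<Rightarrow> complex) set" where
  "S_star_rho = {f. f holomorphic_on ball 0 1 \<and> inj_on f (ball 0 1) \<and>
      f 0 = 0 \<and> deriv f 0 = 1 \<and>
      subordinate (\<lambda>z. if z = 0 then 1 else z * deriv f z / f z) (\<lambda>z. 1 + arsinh z)}"

end

theory Submission
  imports Defs
begin

lemma sinh_arsinh_complex: "sinh (arsinh (x::complex)) = x"
proof -
  define y where "y = x^2 + 1"
  define S where "S = y powr (of_real (1/2))"
  have S2: "S^2 = y"
  proof (cases "y = 0")
    case True then show ?thesis by (simp add: S_def)
  next
    case False
    have "S^2 = exp ((1/2) * ln y) * exp ((1/2) * ln y)"
      using False by (simp add: S_def powr_def power2_eq_square)
    also have "\<dots> = exp (ln y)" by (simp flip: exp_add)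
    also have "\<dots> = y" using False by simp
    finally show ?thesis .
  qed
  have nz: "x + S \<noteq> 0"
  proof
    assume "x + S = 0" then have "S = -x" by (simp add: add_eq_0_iff2)
    then have "S^2 = x^2" by simp
    with S2 show False by (simp add: y_def)
  qed
  have e: "exp (arsinh x) = x + S" using nz by (simp add: arsinh_def S_def y_def)
  have inv: "inverse (x + S) = S - x"
    using nz S2 by (simp add: field_simps y_def power2_eq_square)
  have "sinh (arsinh x) = (exp (arsinh x) - inverse (exp (arsinh x))) / 2"
    by (simp add: sinh_def exp_minus scaleR_conv_of_real)
  also have "\<dots> = x" by (simp add: e inv)
  finally show ?thesis .
qed

lemma tc_mult:
  assumes "h holomorphic_on ball 0 1" "k holomorphic_on ball 0 1"
  shows "taylor_coeff (\<lambda>z. h z * k z) n = (\<Sum>i=0..n. taylor_coeff h i * taylor_coeff k (n-i))"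
proof -
  have "(deriv ^^ n) (\<lambda>z. h z * k z) 0 =
           (\<Sum>i = 0..n. of_nat (n choose i) * (deriv ^^ i) h 0 * (deriv ^^ (n-i)) k 0)"
    by (rule higher_deriv_mult[OF assms]) auto
  then show ?thesis
    unfolding taylor_coeff_def
    by (simp add: sum_divide_distrib binomial_fact divide_simps)
qed

lemma tc_add:
  assumes "h holomorphic_on ball 0 1" "k holomorphic_on ball 0 1"
  shows "taylor_coeff (\<lambda>z. h z + k z) n = taylor_coeff h n + taylor_coeff k n"
  unfolding taylor_coeff_def using higher_deriv_add[OF assms, of 0 n]
  by (simp add: add_divide_distrib)

lemma tc_deriv: "taylor_coeff (deriv h) m = of_nat (Suc m) * taylor_coeff h (Suc m)"
proof -
  have "(fact m + fact m * of_nat m :: complex) \<noteq> 0"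
    by (metis fact_Suc fact_nonzero mult.commute of_nat_Suc distrib_left mult.right_neutral of_nat_fact)
  then show ?thesis
  unfolding taylor_coeff_def by (simp add: funpow_Suc_right del: funpow.simps(2) of_nat_Suc)
    (simp add: field_simps)
qed

lemma tc_cong:
  assumes "\<And>z. z \<in> ball 0 1 \<Longrightarrow> h z = k z"
  shows "taylor_coeff h n = taylor_coeff k n"
proof -
  have "eventually (\<lambda>z. h z = k z) (nhds 0)"
    using assms by (intro eventually_nhds_in_open[of "ball 0 1", THEN eventually_mono]) auto
  then show ?thesis unfolding taylor_coeff_def using higher_deriv_cong_ev by metis
qed

lemma tc_0 [simp]: "taylor_coeff h 0 = h 0" by (simp add: taylor_coeff_def)
lemma tc_1: "taylor_coeff h 1 = deriv h 0" by (simp add: taylor_coeff_def)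
lemma tc_id: "taylor_coeff (\<lambda>z. z) n = (if n = 1 then 1 else 0)"
  by (simp add: taylor_coeff_def)


lemma cauchy_unit:
  assumes hol: "h holomorphic_on ball 0 1" and bd: "\<And>z. z \<in> ball 0 1 \<Longrightarrow> cmod (h z) \<le> 1"
  shows "cmod ((deriv ^^ n) h 0) \<le> fact n"
proof -
  have le: "cmod ((deriv ^^ n) h 0) \<le> fact n * 1 / r^n" if r: "0 < r" "r < 1" for r
  proof (rule Cauchy_inequality)
    show "h holomorphic_on ball 0 r" by (rule holomorphic_on_subset[OF hol]) (use r in auto)
    show "continuous_on (cball 0 r) h"
      using hol r by (intro holomorphic_on_imp_continuous_on holomorphic_on_subset[OF hol]) auto
    show "0 < r" by fact
    fix x :: complex assume "cmod (0 - x) = r" then show "cmod (h x) \<le> 1" using r bd by auto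
  qed
  have lim: "((\<lambda>r::real. fact n / r^n) \<longlongrightarrow> fact n / 1^n) (at_left 1)"
    by (intro tendsto_intros) auto
  have ev: "eventually (\<lambda>r. cmod ((deriv ^^ n) h 0) \<le> fact n / r^n) (at_left (1::real))"
  proof -
    have "eventually (\<lambda>r. r \<in> {0<..<1}) (at_left (1::real))"
      by (rule eventually_at_left_real) simp
    then show ?thesis by eventually_elim (use le in auto)
  qed
  show ?thesis using tendsto_le[OF _ lim tendsto_const ev] by simp
qed

lemma norm_moebius_ident:
  fixes c p :: complex
  shows "cmod (1 - cnj c * p)^2 - cmod (p - c)^2 = (1 - cmod c^2) * (1 - cmod p^2)"
  by (simp only: cmod_power2) (simp add: algebra_simps power2_eq_square)


lemma schwarz_coeff_le1:
  assumes hol: "w holomorphic_on ball 0 1" and map: "w ` ball 0 1 \<subseteq> ball 0 1"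
  shows "cmod (taylor_coeff w n) \<le> 1"
proof -
  have "cmod ((deriv ^^ n) w 0) \<le> fact n"
  proof (rule cauchy_unit[OF hol])
    fix z :: complex assume "z \<in> ball 0 1"
    then have "w z \<in> ball 0 1" using map by blast
    then show "cmod (w z) \<le> 1" by simp
  qed
  then show ?thesis by (simp add: taylor_coeff_def norm_divide divide_le_eq)
qed

lemma schwarz_coeff2:
  assumes hol: "w holomorphic_on ball 0 1" and map: "w ` ball 0 1 \<subseteq> ball 0 1" and w0: "w 0 = 0"
  shows "cmod (taylor_coeff w 2) \<le> 1 - cmod (taylor_coeff w 1)^2"
proof -
  obtain \<phi> where holp: "\<phi> holomorphic_on ball 0 1" and wz: "\<And>z. norm z < 1 \<Longrightarrow> w z = z * \<phi> z"
     and d0: "deriv w 0 = \<phi> 0"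
    using Schwarz3[OF hol w0] by blast
  have no: "norm (w z) < 1" if "norm z < 1" for z
  proof -
    have "z \<in> ball 0 1" using that by simp
    then have "w z \<in> ball 0 1" using map by blast
    then show ?thesis by simp
  qed
  note SL = Schwarz_Lemma[OF hol w0 no]
  have pbd: "cmod (\<phi> z) \<le> 1" if z: "z \<in> ball 0 1" for z
  proof (cases "z = 0")
    case True then show ?thesis using SL(2)[of 0] d0 by simp
  next
    case False
    have "cmod (z * \<phi> z) \<le> cmod z" using SL(1)[of z] wz[of z] z by simp
    then show ?thesis using False by (simp add: norm_mult)
  qed
  have holid: "(\<lambda>z. z) holomorphic_on ball 0 1" by simp
  have T2: "taylor_coeff w 2 = deriv \<phi> 0"
  proof -
    have "taylor_coeff w 2 = taylor_coeff (\<lambda>z. z * \<phi> z) 2" by (rule tc_cong) (simp add: wz)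
    also have "\<dots> = (\<Sum>i=0..2. taylor_coeff (\<lambda>z. z) i * taylor_coeff \<phi> (2-i))"
      by (rule tc_mult[OF holid holp])
    also have "\<dots> = deriv \<phi> 0" by (simp add: tc_id numeral_2_eq_2 taylor_coeff_def)
    finally show ?thesis .
  qed
  have T1: "taylor_coeff w 1 = \<phi> 0" using d0 by (simp add: taylor_coeff_def)
  define c where "c = \<phi> 0"
  have "cmod c \<le> 1" using pbd[of 0] by (simp add: c_def)
  then consider "cmod c = 1" | "cmod c < 1" by linarith
  then show ?thesis
  proof cases
    case 1
    then obtain \<alpha> where \<alpha>: "\<And>z. norm z < 1 \<Longrightarrow> w z = \<alpha> * z"
      using SL(3) d0 c_def by auto
    have "taylor_coeff w 2 = taylor_coeff (\<lambda>z. \<alpha> * z) 2" by (rule tc_cong) (simp add: \<alpha>)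
    also have "\<dots> = 0" by (simp add: taylor_coeff_def)
    finally show ?thesis using 1 T1 c_def by simp
  next
    case 2
    have den: "1 - cnj c * \<phi> z \<noteq> 0" if "z \<in> ball 0 1" for z
    proof
      assume "1 - cnj c * \<phi> z = 0"
      then have "cmod (cnj c * \<phi> z) = 1" by (metis eq_iff_diff_eq_0 norm_one)
      moreover have "cmod (cnj c * \<phi> z) < 1"
        using pbd[OF that] 2 by (simp add: norm_mult) (meson le_less_trans mult_left_le norm_ge_zero)
      ultimately show False by simp
    qed
    define g where "g z = (\<phi> z - c) / (1 - cnj c * \<phi> z)" for z
    have holg: "g holomorphic_on ball 0 1"
      unfolding g_def using den by (intro holomorphic_intros holp) auto
    have gbd: "cmod (g z) \<le> 1" if z: "z \<in> ball 0 1" for z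
    proof -
      have "cmod (\<phi> z - c)^2 \<le> cmod (1 - cnj c * \<phi> z)^2"
        using norm_moebius_ident[of c "\<phi> z"] pbd[OF z] 2
        by (smt (verit) mult_nonneg_nonneg norm_ge_zero power_le_one)
      then have "cmod (\<phi> z - c) \<le> cmod (1 - cnj c * \<phi> z)"
        by (simp add: power2_le_iff_abs_le)
      then show ?thesis using den[OF z] by (simp add: g_def norm_divide divide_le_eq)
    qed
    have "cmod ((deriv ^^ 1) g 0) \<le> fact 1" by (rule cauchy_unit[OF holg gbd])
    then have dg: "cmod (deriv g 0) \<le> 1" by simp
    have dp: "(\<phi> has_field_derivative deriv \<phi> 0) (at 0)"
      using holp by (intro holomorphic_derivI) auto
    have den0: "1 - cnj c * c \<noteq> 0" using den[of 0] by (simp add: c_def)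
    have "(g has_field_derivative deriv \<phi> 0 / (1 - cnj c * c)) (at 0)"
      unfolding g_def
      by (rule derivative_eq_intros dp refl | use den0 in \<open>simp add: c_def\<close>)+
    then have "deriv g 0 = deriv \<phi> 0 / (1 - cnj c * c)" by (rule DERIV_imp_deriv)
    moreover have "1 - cnj c * c = complex_of_real (1 - cmod c ^ 2)"
      using complex_norm_square[of c] by (simp add: mult.commute)
    moreover have r0: "0 < 1 - cmod c ^ 2" using 2 by (simp add: power_less_one_iff abs_square_less_1)
    ultimately have "deriv \<phi> 0 = deriv g 0 * complex_of_real (1 - cmod c ^ 2)"
      using den0 by (simp add: field_simps)
    then have "cmod (deriv \<phi> 0) = cmod (deriv g 0) * (1 - cmod c ^ 2)"
      using r0 norm_of_real[where 'a=complex, of "1 - cmod c ^ 2"] by (simp only: norm_mult)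
    also have "\<dots> \<le> 1 - cmod c ^ 2"
      using dg 2 by (simp add: mult_left_le_one_le abs_square_less_1 less_imp_le power_le_one)
    finally show ?thesis using T1 T2 c_def by simp
  qed
qed


lemma tri: "norm a \<le> A \<Longrightarrow> norm (a + b) \<le> A + norm b"
  by (meson add_right_mono norm_triangle_ineq order_trans)

lemma poly_bound:
  fixes x :: real
  assumes "0 \<le> x" "x \<le> 1"
  shows "1/16 + 1/15 + 1/64*(1-x^2)^4 + 7/60*x*(1-x^2)^2 + 1/30*x^2 + 3/16*x^2*(1-x^2)
     + 7/90*x^3 + 103/2880*x^4*(1-x^2)^2 + 109/1800*x^5 + 139/14400*x^8 \<le> 1/3"
proof -
  define y where "y = 1 - x"
  have y: "0 \<le> y" using assms by (simp add: y_def)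
  have eq: "1/3 - (1/16 + 1/15 + 1/64*(1-x^2)^4 + 7/60*x*(1-x^2)^2 + 1/30*x^2 + 3/16*x^2*(1-x^2)
     + 7/90*x^3 + 103/2880*x^4*(1-x^2)^2 + 109/1800*x^5 + 139/14400*x^8)
     = 181/960*y^8 + 167/120*x*y^7 + 1033/240*x^2*y^6 + 2633/360*x^3*y^5 + 21817/2880*x^4*y^4
       + 17707/3600*x^5*y^3 + 49/25*x^6*y^2 + 439/900*x^7*y + 329/14400*x^8"
    unfolding y_def by algebra
  have "0 \<le> 181/960*y^8 + 167/120*x*y^7 + 1033/240*x^2*y^6 + 2633/360*x^3*y^5 + 21817/2880*x^4*y^4
       + 17707/3600*x^5*y^3 + 49/25*x^6*y^2 + 439/900*x^7*y + 329/14400*x^8"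
    using assms(1) y by (intro add_nonneg_nonneg mult_nonneg_nonneg zero_le_power) auto
  then show ?thesis using eq by linarith
qed

lemma omega_bound:
  fixes c1 c2 c3 c4 c5 :: complex
  assumes h1: "cmod c1 \<le> 1" and h2: "cmod c2 \<le> 1 - cmod c1^2" and h3: "cmod c3 \<le> 1"
    and h4: "cmod c4 \<le> 1" and h5: "cmod c5 \<le> 1"
  shows "cmod (- (1/16)*c4^2 + (1/15)*c3*c5 + (1/64)*c2^4 - (7/60)*c1*c2^2*c3 - (1/30)*c1^2*c3^2
     + (3/16)*c1^2*c2*c4 - (7/90)*c1^3*c5 - (103/2880)*c1^4*c2^2 + (109/1800)*c1^5*c3
     - (139/14400)*c1^8) \<le> 1/3"
proof -
  define x where "x = cmod c1"
  define b where "b = 1 - x^2"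
  have x0: "0 \<le> x" and x1: "x \<le> 1" using h1 by (auto simp: x_def)
  have b0: "0 \<le> b" using x0 x1 by (simp add: b_def power_le_one)
  have y2: "cmod c2 \<le> b" using h2 by (simp add: b_def x_def)
  have "cmod (- (1/16)*c4^2 + (1/15)*c3*c5 + (1/64)*c2^4 + (-(7/60))*c1*c2^2*c3 + (-(1/30))*c1^2*c3^2
     + (3/16)*c1^2*c2*c4 + (-(7/90))*c1^3*c5 + (-(103/2880))*c1^4*c2^2 + (109/1800)*c1^5*c3
     + (-(139/14400))*c1^8) \<le>
     cmod (- (1/16)*c4^2) + cmod ((1/15)*c3*c5) + cmod ((1/64)*c2^4) + cmod ((-(7/60))*c1*c2^2*c3)
     + cmod ((-(1/30))*c1^2*c3^2) + cmod ((3/16)*c1^2*c2*c4) + cmod ((-(7/90))*c1^3*c5)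
     + cmod ((-(103/2880))*c1^4*c2^2) + cmod ((109/1800)*c1^5*c3) + cmod ((-(139/14400))*c1^8)"
    by (rule tri)+ simp
  also have "\<dots> = 1/16*cmod c4^2 + 1/15*cmod c3*cmod c5 + 1/64*cmod c2^4 + 7/60*x*cmod c2^2*cmod c3
     + 1/30*x^2*cmod c3^2 + 3/16*x^2*cmod c2*cmod c4 + 7/90*x^3*cmod c5
     + 103/2880*x^4*cmod c2^2 + 109/1800*x^5*cmod c3 + 139/14400*x^8"
    by (simp add: norm_mult norm_power norm_divide x_def)
  also have "\<dots> \<le> 1/16 + 1/15 + 1/64*b^4 + 7/60*x*b^2 + 1/30*x^2 + 3/16*x^2*b
     + 7/90*x^3 + 103/2880*x^4*b^2 + 109/1800*x^5 + 139/14400*x^8"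
  proof -
    have n2: "0 \<le> cmod c2" "0 \<le> cmod c3" "0 \<le> cmod c4" "0 \<le> cmod c5" by auto
    have a1: "1/16*cmod c4^2 \<le> 1/16" using h4 by (simp add: power_le_one)
    have a2: "1/15*cmod c3*cmod c5 \<le> 1/15" using h3 h5 by (simp add: mult_le_one)
    have a3: "1/64*cmod c2^4 \<le> 1/64*b^4" using y2 by (simp add: power_mono)
    have p22: "cmod c2^2 \<le> b^2" using y2 by (simp add: power_mono)
    have a4: "7/60*x*cmod c2^2*cmod c3 \<le> 7/60*x*b^2"
    proof -
      have "cmod c2^2*cmod c3 \<le> b^2 * 1" using p22 h3 by (intro mult_mono) auto
      then have "x*(cmod c2^2*cmod c3) \<le> x*(b^2)" using x0 by (simp add: mult_left_mono)
      then show ?thesis by (simp add: algebra_simps)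
    qed
    have a5: "1/30*x^2*cmod c3^2 \<le> 1/30*x^2"
      using h3 x0 by (simp add: mult_left_le power_le_one)
    have a6: "3/16*x^2*cmod c2*cmod c4 \<le> 3/16*x^2*b"
    proof -
      have "cmod c2*cmod c4 \<le> b * 1" using y2 h4 b0 by (intro mult_mono) auto
      then have "x^2*(cmod c2*cmod c4) \<le> x^2*b" by (simp add: mult_left_mono)
      then show ?thesis by (simp add: algebra_simps)
    qed
    have a7: "7/90*x^3*cmod c5 \<le> 7/90*x^3" using mult_left_le_one_le[of "x^3" "cmod c5"] h5 x0 by (simp add: mult.commute)
    have a8: "103/2880*x^4*cmod c2^2 \<le> 103/2880*x^4*b^2" using p22 x0 by (simp add: mult_left_mono)
    have a9: "109/1800*x^5*cmod c3 \<le> 109/1800*x^5" using mult_left_le_one_le[of "x^5" "cmod c3"] h3 x0 by (simp add: mult.commute)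
    show ?thesis using a1 a2 a3 a4 a5 a6 a7 a8 a9 by linarith
  qed
  also have "\<dots> \<le> 1/3" unfolding b_def by (rule poly_bound[OF x0 x1])
  finally show ?thesis by (simp add: algebra_simps)
qed


theorem mainTheorem7:
  fixes f :: "complex \<Rightarrow> complex"
  assumes "f \<in> S_star_rho"
  defines "a \<equiv> taylor_coeff f"
  shows "cmod ((a 4 * a 6 - (a 5)^2) - a 2 * (a 3 * a 6 - a 4 * a 5) + a 3 * (a 3 * a 5 - (a 4)^2))
    \<le> (1136896 + 716800 * sqrt (3/157) + 81920 * sqrt (3/67) + 212736 * sqrt (2/35)
        + 74240 * sqrt (21/307) + 10240 * sqrt (6/23)) / 3686400"
proof -
  have holf: "f holomorphic_on ball 0 1" and inj: "inj_on f (ball 0 1)" and f0: "f 0 = 0"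
    and df0: "deriv f 0 = 1"
    and sub: "subordinate (\<lambda>z. if z = 0 then 1 else z * deriv f z / f z) (\<lambda>z. 1 + arsinh z)"
    using assms(1) by (auto simp: S_star_rho_def)
  obtain w where holw: "w holomorphic_on ball 0 1" and mapw: "w ` ball 0 1 \<subseteq> ball 0 1"
    and w0: "w 0 = 0"
    and weq: "\<And>z. z \<in> ball 0 1 \<Longrightarrow> (if z = 0 then 1 else z * deriv f z / f z) = 1 + arsinh (w z)"
    using sub unfolding subordinate_def by blast
  obtain g where holg: "g holomorphic_on ball 0 1" and fg: "\<And>z. norm z < 1 \<Longrightarrow> f z = z * g z"
    and g0': "deriv f 0 = g 0"
    using Schwarz3[OF holf f0] by blast
  have g0: "g 0 = 1" using g0' df0 by simp
  have gnz: "g z \<noteq> 0" if z: "z \<in> ball 0 1" for z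
  proof (cases "z = 0")
    case True then show ?thesis using g0 by simp
  next
    case False
    have "f z \<noteq> f 0" using inj z False by (auto dest: inj_onD)
    then show ?thesis using fg[of z] z f0 by auto
  qed
  have fnz: "f z \<noteq> 0" if "z \<in> ball 0 1" "z \<noteq> 0" for z
    using fg[of z] gnz[of z] that by auto
  define q where "q z = z * deriv g z / g z" for z
  have holdg: "deriv g holomorphic_on ball 0 1" using holg by (intro holomorphic_deriv) auto
  have holq: "q holomorphic_on ball 0 1"
    unfolding q_def using gnz by (intro holomorphic_intros holdg holg) auto
  have q0: "q 0 = 0" by (simp add: q_def)
  have dfz: "deriv f z = g z + z * deriv g z" if z: "z \<in> ball 0 1" for z
  proof -
    have dg: "(g has_field_derivative deriv g z) (at z)"
      using holg z by (intro holomorphic_derivI) auto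
    have "((\<lambda>z. z * g z) has_field_derivative g z + z * deriv g z) (at z)"
      by (rule derivative_eq_intros dg refl | simp)+
    then have "(f has_field_derivative g z + z * deriv g z) (at z)"
      by (rule has_field_derivative_transform_within_open[of _ _ _ "ball 0 1"]) (use z fg in auto)
    then show ?thesis by (rule DERIV_imp_deriv)
  qed
  have zf: "z * deriv f z = f z + f z * q z" if z: "z \<in> ball 0 1" for z
    using dfz[OF z] fg[of z] gnz[OF z] z by (simp add: q_def field_simps)
  have wq: "w z = sinh (q z)" if z: "z \<in> ball 0 1" for z
  proof (cases "z = 0")
    case True then show ?thesis using w0 q0 by simp
  next
    case False
    have "z * deriv f z / f z = 1 + arsinh (w z)" using weq[OF z] False by simp
    moreover have "z * deriv f z / f z = 1 + q z" using zf[OF z] fnz[OF z False]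
      by (simp add: field_simps)
    ultimately have "q z = arsinh (w z)" by simp
    then show ?thesis by (simp add: sinh_arsinh_complex)
  qed
  define c where "c = taylor_coeff w"
  define Q where "Q = taylor_coeff q"
  define K where "K = taylor_coeff (\<lambda>z. cosh (q z))"
  define W where "W = (\<lambda>z. sinh (q z))"
  have holdq: "deriv q holomorphic_on ball 0 1" using holq by (intro holomorphic_deriv) auto
  have holdf: "deriv f holomorphic_on ball 0 1" using holf by (intro holomorphic_deriv) auto
  have anq: "q analytic_on ball 0 1" using holq by (simp add: analytic_on_open)
  have "(\<lambda>z. cosh (q z)) analytic_on ball 0 1" by (rule analytic_on_cosh[OF anq])
  then have holK: "(\<lambda>z. cosh (q z)) holomorphic_on ball 0 1" by (simp add: analytic_on_open)
  have "(\<lambda>z. sinh (q z)) analytic_on ball 0 1" by (rule analytic_on_sinh[OF anq])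
  then have holW: "W holomorphic_on ball 0 1" by (simp add: analytic_on_open W_def)
  have dq: "(q has_field_derivative deriv q z) (at z)" if "z \<in> ball 0 1" for z
    using holq that by (intro holomorphic_derivI) auto
  have cW: "c n = taylor_coeff W n" for n
    unfolding c_def W_def by (rule tc_cong) (simp add: wq)
  have c0: "c 0 = 0" using w0 by (simp add: c_def)
  have K0: "K 0 = 1" using q0 by (simp add: K_def)
  have Q0: "Q 0 = 0" using q0 by (simp add: Q_def)
  have a0: "a 0 = 0" using f0 by (simp add: a_def)
  have a1: "a 1 = 1" using df0 by (simp add: a_def taylor_coeff_def)
  have RW: "of_nat (Suc m) * c (Suc m) = (\<Sum>i=0..m. K i * (of_nat (Suc (m-i)) * Q (Suc (m-i))))" for m
  proof -
    have "of_nat (Suc m) * c (Suc m) = taylor_coeff (deriv W) m" by (simp add: tc_deriv cW)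
    also have "\<dots> = taylor_coeff (\<lambda>z. cosh (q z) * deriv q z) m"
    proof (rule tc_cong)
      fix z :: complex assume z: "z \<in> ball 0 1"
      have "(W has_field_derivative cosh (q z) * deriv q z) (at z)"
        unfolding W_def by (rule derivative_eq_intros dq[OF z] refl)+
      then show "deriv W z = cosh (q z) * deriv q z" by (rule DERIV_imp_deriv)
    qed
    also have "\<dots> = (\<Sum>i=0..m. K i * taylor_coeff (deriv q) (m-i))"
      unfolding K_def by (rule tc_mult[OF holK holdq])
    finally show ?thesis by (simp add: tc_deriv Q_def Suc_diff_le)
  qed
  have RK: "of_nat (Suc m) * K (Suc m) = (\<Sum>i=0..m. c i * (of_nat (Suc (m-i)) * Q (Suc (m-i))))" for m
  proof -
    have "of_nat (Suc m) * K (Suc m) = taylor_coeff (deriv (\<lambda>z. cosh (q z))) m" by (simp add: tc_deriv K_def)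
    also have "\<dots> = taylor_coeff (\<lambda>z. W z * deriv q z) m"
    proof (rule tc_cong)
      fix z :: complex assume z: "z \<in> ball 0 1"
      have "((\<lambda>z. cosh (q z)) has_field_derivative W z * deriv q z) (at z)"
        unfolding W_def by (rule derivative_eq_intros dq[OF z] refl)+
      then show "deriv (\<lambda>z. cosh (q z)) z = W z * deriv q z" by (rule DERIV_imp_deriv)
    qed
    also have "\<dots> = (\<Sum>i=0..m. c i * taylor_coeff (deriv q) (m-i))"
      unfolding cW by (rule tc_mult[OF holW holdq])
    finally show ?thesis by (simp add: tc_deriv Q_def Suc_diff_le)
  qed
  have RF: "of_nat n * a n = a n + (\<Sum>i=0..n. a i * Q (n-i))" if n: "n \<ge> 1" for n
  proof -
    have "taylor_coeff (\<lambda>z. z * deriv f z) n = taylor_coeff (\<lambda>z. f z + f z * q z) n"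
      by (rule tc_cong) (simp add: zf)
    also have "\<dots> = a n + (\<Sum>i=0..n. a i * Q (n-i))"
      unfolding a_def Q_def
      by (subst tc_add[OF holf]) (auto intro!: holomorphic_intros holf holq simp: tc_mult[OF holf holq])
    also have "taylor_coeff (\<lambda>z. z * deriv f z) n = (\<Sum>i=0..n. taylor_coeff (\<lambda>z. z) i * taylor_coeff (deriv f) (n-i))"
      by (rule tc_mult[OF _ holdf]) simp
    also have "\<dots> = (\<Sum>i=0..n. if i = 1 then taylor_coeff (deriv f) (n-1) else 0)"
      by (rule sum.cong) (auto simp: tc_id)
    also have "\<dots> = taylor_coeff (deriv f) (n-1)"
      using n by simp
    also have "\<dots> = of_nat n * a n" using n by (simp add: tc_deriv a_def)
    finally show ?thesis .
  qed
  note SS = atLeast0_atMost_Suc eval_nat_numeral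
  have rw0: "c 1 = K 0 * Q 1" using RW[of 0] by simp
  have rw1: "2 * c 2 = K 0 * (2 * Q 2) + K 1 * Q 1" using RW[of 1] by (simp add: SS)
  have rw2: "3 * c 3 = K 0 * (3 * Q 3) + K 1 * (2 * Q 2) + K 2 * Q 1" using RW[of 2] by (simp add: SS)
  have rw3: "4 * c 4 = K 0 * (4 * Q 4) + K 1 * (3 * Q 3) + K 2 * (2 * Q 2) + K 3 * Q 1"
    using RW[of 3] by (simp add: SS)
  have rw4: "5 * c 5 = K 0 * (5 * Q 5) + K 1 * (4 * Q 4) + K 2 * (3 * Q 3) + K 3 * (2 * Q 2) + K 4 * Q 1"
    using RW[of 4] by (simp add: SS)
  have rk0: "K 1 = c 0 * Q 1" using RK[of 0] by simp
  have rk1: "2 * K 2 = c 0 * (2 * Q 2) + c 1 * Q 1" using RK[of 1] by (simp add: SS)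
  have rk2: "3 * K 3 = c 0 * (3 * Q 3) + c 1 * (2 * Q 2) + c 2 * Q 1" using RK[of 2] by (simp add: SS)
  have rk3: "4 * K 4 = c 0 * (4 * Q 4) + c 1 * (3 * Q 3) + c 2 * (2 * Q 2) + c 3 * Q 1"
    using RK[of 3] by (simp add: SS)
  have rf2: "2 * a 2 = a 2 + (a 0 * Q 2 + a 1 * Q 1 + a 2 * Q 0)" using RF[of 2] by (simp add: SS add_ac)
  have rf3: "3 * a 3 = a 3 + (a 0 * Q 3 + a 1 * Q 2 + a 2 * Q 1 + a 3 * Q 0)" using RF[of 3] by (simp add: SS)
  have rf4: "4 * a 4 = a 4 + (a 0 * Q 4 + a 1 * Q 3 + a 2 * Q 2 + a 3 * Q 1 + a 4 * Q 0)"
    using RF[of 4] by (simp add: SS)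
  have rf5: "5 * a 5 = a 5 + (a 0 * Q 5 + a 1 * Q 4 + a 2 * Q 3 + a 3 * Q 2 + a 4 * Q 1 + a 5 * Q 0)"
    using RF[of 5] by (simp add: SS)
  have rf6: "6 * a 6 = a 6 + (a 0 * Q 6 + a 1 * Q 5 + a 2 * Q 4 + a 3 * Q 3 + a 4 * Q 2 + a 5 * Q 1 + a 6 * Q 0)"
    using RF[of 6] by (simp add: SS)
  have Q1: "Q 1 = c 1" using rw0 K0 by simp
  have K1: "K 1 = 0" using rk0 c0 by simp
  have Q2: "Q 2 = c 2" using rw1 K0 K1 by simp
  have K2: "2 * K 2 = c 1^2" using rk1 c0 Q1 by (simp add: power2_eq_square)
  have Q3: "6 * Q 3 = 6 * c 3 - c 1^3" using rw2 K0 K1 K2 Q1 Q2 by algebra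
  have K3: "K 3 = c 1 * c 2" using rk2 c0 Q1 Q2 by algebra
  have Q4: "2 * Q 4 = 2 * c 4 - c 1^2 * c 2" using rw3 K0 K1 K2 K3 Q1 Q2 Q3 by algebra
  have K4: "8 * K 4 = 4 * c 2^2 + 8 * c 1 * c 3 - c 1^4" using rk3 c0 Q1 Q2 Q3 by algebra
  have Q5: "40 * Q 5 = 40 * c 5 - 20 * c 1 * c 2^2 - 20 * c 1^2 * c 3 + 3 * c 1^5"
    using rw4 K0 K1 K2 K3 K4 Q1 Q2 Q3 Q4 by algebra
  have A2: "a 2 = c 1" using rf2 a0 a1 Q0 Q1 by simp
  have A3: "2 * a 3 = c 2 + c 1^2" using rf3 a0 a1 Q0 Q1 Q2 A2 by algebra
  have A4: "18 * a 4 = 6*c 3 + 9*c 1*c 2 + 2*c 1^3" using rf4 a0 a1 Q0 Q1 Q2 Q3 A2 A3 by algebra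
  have A5: "72 * a 5 = 18*c 4 + 9*c 2^2 + 24*c 1*c 3 + 9*c 1^2*c 2 - c 1^4"
    using rf5 a0 a1 Q0 Q1 Q2 Q3 Q4 A2 A3 A4 by algebra
  have A6: "1800 * a 6 = 360*c 5 + 300*c 2*c 3 + 450*c 1*c 4 + 45*c 1*c 2^2 + 120*c 1^2*c 3
      - 125*c 1^3*c 2 - 8*c 1^5"
    using rf6 a0 a1 Q0 Q1 Q2 Q3 Q4 Q5 A2 A3 A4 A5 by algebra
  have "129600*((a 4 * a 6 - (a 5)^2) - a 2 * (a 3 * a 6 - a 4 * a 5) + a 3 * (a 3 * a 5 - (a 4)^2))
     = 4*(18*a 4)*(1800*a 6) - 25*(72*a 5)^2 - 36*a 2*(2*a 3)*(1800*a 6) + 100*a 2*(18*a 4)*(72*a 5)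
       + 450*(2*a 3)^2*(72*a 5) - 200*(2*a 3)*(18*a 4)^2"
    by algebra
  also have "\<dots> = -8100*c 4^2 + 8640*c 3*c 5 + 2025*c 2^4 - 15120*c 1*c 2^2*c 3 - 4320*c 1^2*c 3^2
      + 24300*c 1^2*c 2*c 4 - 10080*c 1^3*c 5 - 4635*c 1^4*c 2^2 + 7848*c 1^5*c 3 - 1251*c 1^8"
    unfolding A2 A3 A4 A5 A6 by algebra
  finally have Om0: "(a 4 * a 6 - (a 5)^2) - a 2 * (a 3 * a 6 - a 4 * a 5) + a 3 * (a 3 * a 5 - (a 4)^2)
     = (-8100*c 4^2 + 8640*c 3*c 5 + 2025*c 2^4 - 15120*c 1*c 2^2*c 3 - 4320*c 1^2*c 3^2
      + 24300*c 1^2*c 2*c 4 - 10080*c 1^3*c 5 - 4635*c 1^4*c 2^2 + 7848*c 1^5*c 3 - 1251*c 1^8) / 129600"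
    by (simp add: field_simps)
  have Om: "(a 4 * a 6 - (a 5)^2) - a 2 * (a 3 * a 6 - a 4 * a 5) + a 3 * (a 3 * a 5 - (a 4)^2)
     = - (1/16)*c 4^2 + (1/15)*c 3*c 5 + (1/64)*c 2^4 - (7/60)*c 1*c 2^2*c 3 - (1/30)*c 1^2*c 3^2
     + (3/16)*c 1^2*c 2*c 4 - (7/90)*c 1^3*c 5 - (103/2880)*c 1^4*c 2^2 + (109/1800)*c 1^5*c 3
     - (139/14400)*c 1^8"
    unfolding Om0 by (simp add: field_simps)
  have cb: "cmod (c n) \<le> 1" for n unfolding c_def by (rule schwarz_coeff_le1[OF holw mapw])
  have c2b: "cmod (c 2) \<le> 1 - cmod (c 1)^2" unfolding c_def by (rule schwarz_coeff2[OF holw mapw w0])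
  have "cmod ((a 4 * a 6 - (a 5)^2) - a 2 * (a 3 * a 6 - a 4 * a 5) + a 3 * (a 3 * a 5 - (a 4)^2)) \<le> 1/3"
    unfolding Om by (rule omega_bound[OF cb c2b cb cb cb])
  also have "(1::real)/3 \<le> (1136896 + 716800 * sqrt (3/157) + 81920 * sqrt (3/67) + 212736 * sqrt (2/35)
        + 74240 * sqrt (21/307) + 10240 * sqrt (6/23)) / 3686400"
  proof -
    have "13/100 \<le> sqrt (3/157::real)" by (rule real_le_rsqrt) (simp add: power2_eq_square)
    moreover have "0 \<le> sqrt (3/67::real)" "0 \<le> sqrt (2/35::real)" "0 \<le> sqrt (21/307::real)"
      "0 \<le> sqrt (6/23::real)" by auto
    ultimately have "1228800 \<le> 1136896 + 716800 * sqrt (3/157) + 81920 * sqrt (3/67) + 212736 * sqrt (2/35)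
        + 74240 * sqrt (21/307) + 10240 * sqrt (6/23::real)" by linarith
    then show ?thesis by (simp add: le_divide_eq)
  qed
  finally show ?thesis .
qed

end
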